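(* Let $E$ be a symmetric operator defined on a dense domain $\mathcal D$ of a Hilbert space $\mathcal H$. Let $\mathbf d=\{d_i\}_{i\in\mathbb N}$ and $\boldsymbol\lambda=\{\lambda_i\}_{i\in\mathbb N}$ be two nondecreasing real sequences such that \[ \delta_k:=\sum_{i=1}^k(d_i-\lambda_i)\ge0\qquad\text{for all }k\in\mathbb N, \] and suppose $\delta_k=0$ for infinitely many $k\in\mathbb N$. Let $\{f_i\}_{i\in\mathbb N}\subset\mathcal D$ be an orthonormal sequence with $\langle Ef_i,f_i\rangle=\lambda_i$ for all $i$. Then there exists an orthonormal sequence $\{e_i\}_{i\in\mathbb N}$, each element of which lies in the (algebraic) linear span of $\{f_i\}_{i\in\mathbb N}$, such that $\overline{\operatorname{span}}\{e_i\}=\overline{\operatorname{span}}\{f_i\}$ and $\langle Ee_i,e_i\rangle=d_i$ for all $i\in\mathbb N$.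
   Context: $E$ symmetric means $\langle Ef,g\rangle=\langle f,Eg\rangle$ for all $f,g\in\mathcal D$. $\overline{\operatorname{span}}$ is the closed linear span. *)

theory Defs
  imports "HOL-Analysis.Analysis"
begin

class complex_hilbert = real_normed_vector + complete_space +
  fixes scaleC :: "complex \<Rightarrow> 'a \<Rightarrow> 'a"
    and cinner :: "'a \<Rightarrow> 'a \<Rightarrow> complex"
  assumes scaleC_add_right: "scaleC a (x + y) = scaleC a x + scaleC a y"
    and scaleC_add_left: "scaleC (a + b) x = scaleC a x + scaleC b x"
    and scaleC_scaleC: "scaleC a (scaleC b x) = scaleC (a * b) x"
    and scaleC_one: "scaleC 1 x = x"
    and scaleC_of_real: "scaleC (complex_of_real r) x = scaleR r x"
    and cinner_conj_commute: "cinner y x = cnj (cinner x y)"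
    and cinner_add_left: "cinner (x + y) z = cinner x z + cinner y z"
    and cinner_scaleC_left: "cinner (scaleC a x) y = a * cinner x y"
    and cinner_self_nonneg: "0 \<le> Re (cinner x x)"
    and cinner_self_eq_zero: "cinner x x = 0 \<longleftrightarrow> x = 0"
    and norm_eq_sqrt_cinner: "norm x = sqrt (Re (cinner x x))"

definition cspan :: "'a::complex_hilbert set \<Rightarrow> 'a set" where
  "cspan S = {x. \<exists>T c. finite T \<and> T \<subseteq> S \<and> x = (\<Sum>v\<in>T. scaleC (c v) v)}"

definition csubspace :: "'a::complex_hilbert set \<Rightarrow> bool" where
  "csubspace D \<longleftrightarrow> 0 \<in> D \<and> (\<forall>x\<in>D. \<forall>y\<in>D. x + y \<in> D) \<and> (\<forall>c. \<forall>x\<in>D. scaleC c x \<in> D)"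

definition operator_on :: "'a::complex_hilbert set \<Rightarrow> ('a \<Rightarrow> 'a) \<Rightarrow> bool" where
  "operator_on D E \<longleftrightarrow> csubspace D \<and>
     (\<forall>x\<in>D. \<forall>y\<in>D. E (x + y) = E x + E y) \<and> (\<forall>c. \<forall>x\<in>D. E (scaleC c x) = scaleC c (E x))"

definition symmetric_on :: "'a::complex_hilbert set \<Rightarrow> ('a \<Rightarrow> 'a) \<Rightarrow> bool" where
  "symmetric_on D E \<longleftrightarrow> (\<forall>f\<in>D. \<forall>g\<in>D. cinner (E f) g = cinner f (E g))"

definition orthonormal_seq :: "(nat \<Rightarrow> 'a::complex_hilbert) \<Rightarrow> bool" where
  "orthonormal_seq e \<longleftrightarrow> (\<forall>i j. cinner (e i) (e j) = (if i = j then 1 else 0))"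

end

theory Submission
  imports Defs
begin


context complex_hilbert begin

lemma scaleC_zero_right[simp]: "scaleC a 0 = 0"
  using scaleC_add_right[of a 0 0] by simp

lemma scaleC_zero_left[simp]: "scaleC 0 x = 0"
  using scaleC_add_left[of 0 0 x] by simp

lemma scaleC_minus_right: "scaleC a (- x) = - scaleC a x"
proof -
  have "scaleC a x + scaleC a (- x) = 0" using scaleC_add_right[of a x "-x"] by simp
  thus ?thesis by (metis add.commute add_eq_0_iff)
qed

lemma scaleC_diff_right: "scaleC a (x - y) = scaleC a x - scaleC a y"
  by (metis diff_conv_add_uminus scaleC_add_right scaleC_minus_right)

lemma scaleC_sum_right: "scaleC a (sum g A) = (\<Sum>i\<in>A. scaleC a (g i))"
  by (induction A rule: infinite_finite_induct) (auto simp: scaleC_add_right)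

lemma cinner_zero_left[simp]: "cinner 0 y = 0"
  using cinner_add_left[of 0 0 y] by simp

lemma cinner_zero_right[simp]: "cinner x 0 = 0"
  using cinner_conj_commute[of 0 x] by simp

lemma cinner_add_right: "cinner x (y + z) = cinner x y + cinner x z"
  by (metis cinner_add_left cinner_conj_commute complex_cnj_add)

lemma cinner_scaleC_right: "cinner x (scaleC a y) = cnj a * cinner x y"
  by (metis cinner_scaleC_left cinner_conj_commute complex_cnj_mult)

lemma cinner_sum_left: "cinner (sum g A) y = (\<Sum>i\<in>A. cinner (g i) y)"
  by (induction A rule: infinite_finite_induct) (auto simp: cinner_add_left)

lemma cinner_expand2:
  "cinner (scaleC a1 x1 + scaleC b1 y1) (scaleC a2 x2 + scaleC b2 y2) =
   a1 * cnj a2 * cinner x1 x2 + a1 * cnj b2 * cinner x1 y2 + b1 * cnj a2 * cinner y1 x2 + b1 * cnj b2 * cinner y1 y2"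
  by (simp add: cinner_add_left cinner_add_right cinner_scaleC_left cinner_scaleC_right algebra_simps)

end

lemma cspan_induct:
  assumes "x \<in> cspan S" "Q 0" "\<And>x y. Q x \<Longrightarrow> Q y \<Longrightarrow> Q (x + y)"
    "\<And>c x. Q x \<Longrightarrow> Q (scaleC c x)" "\<And>x. x \<in> S \<Longrightarrow> Q x"
  shows "Q x"
proof -
  obtain T c where T: "finite T" "T \<subseteq> S" "x = (\<Sum>v\<in>T. scaleC (c v) v)"
    using assms(1) unfolding cspan_def by blast
  have "Q (\<Sum>v\<in>T. scaleC (c v) v)" using T(1,2)
    by (induction T rule: finite_induct) (auto intro: assms)
  thus ?thesis using T by simp
qed

lemma cspan_zero[simp]: "0 \<in> cspan S"
  unfolding cspan_def by (rule CollectI, rule exI[of _ "{}"]) simp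

lemma cspan_superset: "x \<in> S \<Longrightarrow> x \<in> cspan S"
  unfolding cspan_def
  by (rule CollectI, rule exI[of _ "{x}"], rule exI[of _ "\<lambda>_. 1"]) (simp add: scaleC_one)

lemma cspan_scale: fixes S :: "'a::complex_hilbert set" shows "x \<in> cspan S \<Longrightarrow> scaleC a x \<in> cspan S"
  unfolding cspan_def
proof (clarify)
  fix T :: "'a set" and c :: "'a \<Rightarrow> complex" assume T: "finite T" "T \<subseteq> S"
  show "\<exists>T' c'. finite T' \<and> T' \<subseteq> S \<and> scaleC a (\<Sum>v\<in>T. scaleC (c v) v) = (\<Sum>v\<in>T'. scaleC (c' v) v)"
    by (rule exI[of _ T], rule exI[of _ "\<lambda>v. a * c v"]) (simp add: T scaleC_sum_right scaleC_scaleC)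
qed

lemma cspan_add: fixes S :: "'a::complex_hilbert set" shows "x \<in> cspan S \<Longrightarrow> y \<in> cspan S \<Longrightarrow> x + y \<in> cspan S"
  unfolding cspan_def
proof (clarify)
  fix T1 T2 :: "'a set" and c1 c2 :: "'a \<Rightarrow> complex" assume T: "finite T1" "T1 \<subseteq> S" "finite T2" "T2 \<subseteq> S"
  let ?c = "\<lambda>v. (if v \<in> T1 then c1 v else 0) + (if v \<in> T2 then c2 v else 0)"
  have e1: "(\<Sum>v\<in>T1 \<union> T2. scaleC (if v \<in> T1 then c1 v else 0) v) = (\<Sum>v\<in>T1. scaleC (c1 v) v)"
    by (rule sum.mono_neutral_cong_right) (use T in auto)
  have e2: "(\<Sum>v\<in>T1 \<union> T2. scaleC (if v \<in> T2 then c2 v else 0) v) = (\<Sum>v\<in>T2. scaleC (c2 v) v)"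
    by (rule sum.mono_neutral_cong_right) (use T in auto)
  have "(\<Sum>v\<in>T1 \<union> T2. scaleC (?c v) v) = (\<Sum>v\<in>T1. scaleC (c1 v) v) + (\<Sum>v\<in>T2. scaleC (c2 v) v)"
    unfolding e1[symmetric] e2[symmetric] by (simp add: scaleC_add_left sum.distrib)
  thus "\<exists>T' c'. finite T' \<and> T' \<subseteq> S \<and> (\<Sum>v\<in>T1. scaleC (c1 v) v) + (\<Sum>v\<in>T2. scaleC (c2 v) v) = (\<Sum>v\<in>T'. scaleC (c' v) v)"
    using T by (intro exI[of _ "T1 \<union> T2"] exI[of _ ?c]) auto
qed

lemma cspan_subset: "A \<subseteq> cspan B \<Longrightarrow> cspan A \<subseteq> cspan B"
proof
  fix x assume "A \<subseteq> cspan B" "x \<in> cspan A"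
  thus "x \<in> cspan B"
    by (rule_tac cspan_induct[of x A "\<lambda>x. x \<in> cspan B"]) (auto intro: cspan_add cspan_scale)
qed

lemma cspan_mono: "A \<subseteq> B \<Longrightarrow> cspan A \<subseteq> cspan B"
  by (rule cspan_subset) (auto intro: cspan_superset)

lemma cspan_in_subspace: "csubspace D \<Longrightarrow> S \<subseteq> D \<Longrightarrow> cspan S \<subseteq> D"
proof
  fix x assume "csubspace D" "S \<subseteq> D" "x \<in> cspan S"
  thus "x \<in> D" unfolding csubspace_def
    by (rule_tac cspan_induct[of x S "\<lambda>x. x \<in> D"]) auto
qed

lemma cspan_orth:
  assumes "x \<in> cspan A" "y \<in> cspan B" "\<And>a b. a \<in> A \<Longrightarrow> b \<in> B \<Longrightarrow> cinner a b = 0"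
  shows "cinner x y = 0"
proof -
  have "\<forall>a\<in>A. cinner a y = 0"
  proof
    fix a assume a: "a \<in> A"
    have "cinner y a = 0" using assms(2)
    proof (rule cspan_induct[where Q="\<lambda>y. cinner y a = 0"])
      fix b assume "b \<in> B" thus "cinner b a = 0"
        using assms(3)[OF a] by (metis cinner_conj_commute complex_cnj_zero)
    qed (auto simp: cinner_add_left cinner_scaleC_left)
    thus "cinner a y = 0" by (metis cinner_conj_commute complex_cnj_zero)
  qed
  thus ?thesis using assms(1)
    by (rule_tac cspan_induct[of x A "\<lambda>x. cinner x y = 0"]) (auto simp: cinner_add_left cinner_scaleC_left)
qed



lemma lin2:
  fixes x y :: "'a::complex_hilbert"
  shows "scaleC c1 (scaleC a1 x + scaleC b1 y) + scaleC c2 (scaleC a2 x + scaleC b2 y) =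
    scaleC (c1*a1 + c2*a2) x + scaleC (c1*b1 + c2*b2) y"
  by (simp add: scaleC_add_right scaleC_scaleC scaleC_add_left algebra_simps)

lemma cspan_lin2: "x \<in> cspan S \<Longrightarrow> y \<in> cspan S \<Longrightarrow> scaleC a x + scaleC b y \<in> cspan S"
  by (intro cspan_add cspan_scale)

locale ops =
  fixes D :: "'a::complex_hilbert set" and E :: "'a \<Rightarrow> 'a"
  assumes op: "operator_on D E" and sym: "symmetric_on D E"
begin

lemma D_sub: "csubspace D" using op unfolding operator_on_def by simp

lemma E_add: "x \<in> D \<Longrightarrow> y \<in> D \<Longrightarrow> E (x + y) = E x + E y"
  using op unfolding operator_on_def by simp

lemma E_scale: "x \<in> D \<Longrightarrow> E (scaleC c x) = scaleC c (E x)"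
  using op unfolding operator_on_def by simp

lemma D_scale: "x \<in> D \<Longrightarrow> scaleC c x \<in> D"
  using D_sub unfolding csubspace_def by simp

lemma E_lin2: "x \<in> D \<Longrightarrow> y \<in> D \<Longrightarrow> E (scaleC a x + scaleC b y) = scaleC a (E x) + scaleC b (E y)"
  by (simp add: E_add E_scale D_scale)

lemma cspan_D: "S \<subseteq> D \<Longrightarrow> cspan S \<subseteq> D"
  using cspan_in_subspace[OF D_sub] .

lemma symm: "x \<in> D \<Longrightarrow> y \<in> D \<Longrightarrow> cinner (E x) y = cinner x (E y)"
  using sym unfolding symmetric_on_def by blast

lemma rotate:
  assumes xD: "x \<in> D" and yD: "y \<in> D" and xx: "cinner x x = 1" and yy: "cinner y y = 1"
    and xy: "cinner x y = 0"
    and Ex: "cinner (E x) x = complex_of_real a" and Ey: "cinner (E y) y = complex_of_real b"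
    and at: "a \<le> t" and tb: "t \<le> b"
  shows "\<exists>u v. u \<in> cspan {x,y} \<and> v \<in> cspan {x,y} \<and> x \<in> cspan {u,v} \<and> y \<in> cspan {u,v}
     \<and> cinner u u = 1 \<and> cinner v v = 1 \<and> cinner u v = 0
     \<and> cinner (E u) u = complex_of_real t \<and> cinner (E v) v = complex_of_real (a + b - t)"
proof (cases "a = b")
  case True
  hence "t = a" using at tb by simp
  thus ?thesis using True xx yy xy Ex Ey
    by (intro exI[of _ x] exI[of _ y]) (auto intro: cspan_superset)
next
  case False
  hence ab: "a < b" using at tb by simp
  define p where "p = (b - t) / (b - a)"
  have p0: "0 \<le> p" and p1: "p \<le> 1" using ab at tb by (auto simp: p_def)
  define \<alpha> where "\<alpha> = complex_of_real (sqrt p)"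
  define s where "s = sqrt (1 - p)"
  define m where "m = cinner (E y) x"
  define \<omega> where "\<omega> = (if m = 0 then 1 else \<i> * cnj m / complex_of_real (cmod m))"
  define \<beta> where "\<beta> = complex_of_real s * \<omega>"
  have yx: "cinner y x = 0" using xy by (metis cinner_conj_commute complex_cnj_zero)
  have Exy: "cinner (E x) y = cnj m" unfolding m_def
    using symm[OF xD yD] by (metis cinner_conj_commute)
  have ca: "cnj \<alpha> = \<alpha>" by (simp add: \<alpha>_def)
  have aa: "\<alpha> * \<alpha> = complex_of_real p" using p0
    by (simp add: \<alpha>_def flip: of_real_mult)
  have ww: "\<omega> * cnj \<omega> = 1"
  proof (cases "m = 0")
    case False
    have "\<omega> * cnj \<omega> = (cnj m * m) / complex_of_real (cmod m * cmod m)"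
      using False by (simp add: \<omega>_def field_simps)
    also have "cnj m * m = complex_of_real (cmod m * cmod m)"
      by (metis complex_norm_square mult.commute power2_eq_square)
    finally show ?thesis using False by simp
  qed (simp add: \<omega>_def)
  have bb: "\<beta> * cnj \<beta> = complex_of_real (1 - p)"
  proof -
    have "\<beta> * cnj \<beta> = complex_of_real (s * s) * (\<omega> * cnj \<omega>)"
      by (simp add: \<beta>_def)
    thus ?thesis using p1 by (simp add: ww s_def)
  qed
  have wm: "\<omega> * m + cnj \<omega> * cnj m = 0"
  proof (cases "m = 0")
    case False
    have "\<omega> * m + cnj \<omega> * cnj m = (\<i> * (cnj m * m) - \<i> * (m * cnj m)) / complex_of_real (cmod m)"
      using False by (simp add: \<omega>_def field_simps)
    thus ?thesis by (simp add: mult.commute)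
  qed (simp add: \<omega>_def)
  have bm: "\<beta> * m + cnj \<beta> * cnj m = 0"
  proof -
    have "\<beta> * m + cnj \<beta> * cnj m = complex_of_real s * (\<omega> * m + cnj \<omega> * cnj m)"
      by (simp add: \<beta>_def algebra_simps)
    thus ?thesis using wm by simp
  qed
  define u where "u = scaleC \<alpha> x + scaleC \<beta> y"
  define v where "v = scaleC (- cnj \<beta>) x + scaleC \<alpha> y"
  have uu: "cinner u u = 1"
    unfolding u_def cinner_expand2 using xx yy xy yx aa bb ca
    by (simp add: algebra_simps flip: of_real_add)
  have vv: "cinner v v = 1"
    unfolding v_def cinner_expand2 using xx yy xy yx aa bb ca
    by (simp add: algebra_simps flip: of_real_add)
  have uv: "cinner u v = 0"
    unfolding u_def v_def cinner_expand2 using xx yy xy yx ca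
    by (simp add: algebra_simps)
  have pp: "p * (b - a) = b - t" using ab by (simp add: p_def)
  have tt: "p * a + (1 - p) * b = t" using pp by (simp add: algebra_simps)
  have Eu: "cinner (E u) u = complex_of_real t"
  proof -
    have "cinner (E u) u = \<alpha> * \<alpha> * complex_of_real a + \<alpha> * (\<beta> * m + cnj \<beta> * cnj m) + \<beta> * cnj \<beta> * complex_of_real b"
      unfolding u_def E_lin2[OF xD yD] cinner_expand2 using Ex Ey Exy ca
      by (simp add: m_def algebra_simps)
    also have "\<dots> = complex_of_real (p * a + (1 - p) * b)" using aa bb bm by simp
    finally show ?thesis using tt by simp
  qed
  have Ev: "cinner (E v) v = complex_of_real (a + b - t)"
  proof -
    have "cinner (E v) v = \<beta> * cnj \<beta> * complex_of_real a - \<alpha> * (\<beta> * m + cnj \<beta> * cnj m) + \<alpha> * \<alpha> * complex_of_real b"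
      unfolding v_def E_lin2[OF xD yD] cinner_expand2 using Ex Ey Exy ca
      by (simp add: m_def algebra_simps)
    also have "\<dots> = complex_of_real ((1 - p) * a + p * b)" using aa bb bm by simp
    moreover have "(1 - p) * a + p * b = a + b - t" using pp by (simp add: algebra_simps)
    ultimately show ?thesis by simp
  qed
  have xs: "x \<in> cspan {x,y}" "y \<in> cspan {x,y}" by (auto intro: cspan_superset)
  have us: "u \<in> cspan {u,v}" "v \<in> cspan {u,v}" by (auto intro: cspan_superset)
  have "scaleC \<alpha> u + scaleC (- \<beta>) v = scaleC (\<alpha>*\<alpha> + \<beta> * cnj \<beta>) x + scaleC (\<alpha>*\<beta> - \<beta>*\<alpha>) y"
    unfolding u_def v_def lin2 by (simp add: algebra_simps)
  also have "\<dots> = x" using aa bb by (simp add: scaleC_one flip: of_real_add)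
  finally have xsp: "x \<in> cspan {u,v}" using cspan_lin2[OF us] by metis
  have "scaleC (cnj \<beta>) u + scaleC \<alpha> v = scaleC (cnj \<beta> * \<alpha> - \<alpha> * cnj \<beta>) x + scaleC (\<beta> * cnj \<beta> + \<alpha>*\<alpha>) y"
    unfolding u_def v_def lin2 by (simp add: algebra_simps)
  also have "\<dots> = y" using aa bb by (simp add: scaleC_one flip: of_real_add)
  finally have ysp: "y \<in> cspan {u,v}" using cspan_lin2[OF us] by metis
  show ?thesis
    apply (rule exI[of _ u], rule exI[of _ v])
    using uu vv uv Eu Ev xsp ysp cspan_lin2[OF xs] by (simp add: u_def v_def)
qed

end


definition onf :: "nat \<Rightarrow> (nat \<Rightarrow> 'a::complex_hilbert) \<Rightarrow> bool" where
  "onf N g \<longleftrightarrow> (\<forall>i<N. \<forall>k<N. cinner (g i) (g k) = (if i = k then 1 else 0))"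

lemma cinner_sym0: "cinner x y = 0 \<Longrightarrow> cinner y x = 0"
  by (metis cinner_conj_commute complex_cnj_zero)

context ops begin

lemma fin_step_index:
  fixes lam dd :: "nat \<Rightarrow> real"
  assumes "0 < n" "lam 0 \<le> dd 0" "dd 0 \<le> lam n"
  shows "\<exists>j<n. lam j \<le> dd 0 \<and> dd 0 \<le> lam (Suc j)"
proof -
  have nn: "dd 0 \<le> lam (Suc (n - 1))" using assms by simp
  hence ex: "\<exists>i. dd 0 \<le> lam (Suc i)" by blast
  define j where "j = (LEAST i. dd 0 \<le> lam (Suc i))"
  have j1: "dd 0 \<le> lam (Suc j)" unfolding j_def using ex by (rule LeastI_ex)
  have "j \<le> n - 1" unfolding j_def using nn by (rule Least_le)
  hence jn: "j < n" using assms(1) by simp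
  have j2: "lam j \<le> dd 0"
  proof (cases j)
    case (Suc j')
    hence "\<not> dd 0 \<le> lam (Suc j')" unfolding j_def
      using not_less_Least[of j' "\<lambda>i. dd 0 \<le> lam (Suc i)"] by (simp add: j_def)
    thus ?thesis using Suc by simp
  qed (use assms in simp)
  show ?thesis using j1 j2 jn by blast
qed

lemma fin:
  "\<And>g lam dd. (\<forall>i<N. g i \<in> D) \<Longrightarrow> onf N g \<Longrightarrow>
   (\<forall>i<N. cinner (E (g i)) (g i) = complex_of_real (lam i)) \<Longrightarrow>
   (\<forall>i k. i \<le> k \<longrightarrow> k < N \<longrightarrow> lam i \<le> lam k) \<Longrightarrow>
   (\<forall>i k. i \<le> k \<longrightarrow> k < N \<longrightarrow> dd i \<le> dd k) \<Longrightarrow>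
   (\<forall>k\<le>N. (\<Sum>i<k. lam i) \<le> (\<Sum>i<k. dd i)) \<Longrightarrow>
   (\<Sum>i<N. lam i) = (\<Sum>i<N. dd i) \<Longrightarrow>
   \<exists>e. onf N e \<and> (\<forall>i<N. e i \<in> cspan (g ` {..<N})) \<and> (\<forall>i<N. g i \<in> cspan (e ` {..<N}))
      \<and> (\<forall>i<N. cinner (E (e i)) (e i) = complex_of_real (dd i))"
proof (induction N)
  case 0
  show ?case by (simp add: onf_def)
next
  case (Suc n g lam dd)
  note gD = Suc.prems(1) and gon = Suc.prems(2) and gdiag = Suc.prems(3)
    and lsort = Suc.prems(4) and dsort = Suc.prems(5) and maj = Suc.prems(6) and tot = Suc.prems(7)
  show ?case
  proof (cases "n = 0")
    case True
    have "dd 0 = lam 0" using tot True by simp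
    thus ?thesis using True gon gdiag
      by (intro exI[of _ g]) (auto intro: cspan_superset)
  next
    case False
    hence n0: "0 < n" by simp
    have l0: "lam 0 \<le> dd 0" using maj[rule_format, of 1] by simp
    have "(\<Sum>i<n. lam i) \<le> (\<Sum>i<n. dd i)" using maj by simp
    hence "dd n \<le> lam n" using tot by simp
    moreover have "dd 0 \<le> dd n" using dsort by simp
    ultimately have "dd 0 \<le> lam n" by simp
    then obtain j where jn: "j < n" and j1: "lam j \<le> dd 0" and j2: "dd 0 \<le> lam (Suc j)"
      using fin_step_index[of n lam dd] n0 l0 by blast
    have gjD: "g j \<in> D" "g (Suc j) \<in> D" using gD jn by auto
    have gon': "cinner (g i) (g k) = (if i = k then 1 else 0)" if "i < Suc n" "k < Suc n" for i k
      using gon that unfolding onf_def by blast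
    obtain u v where uv: "u \<in> cspan {g j, g (Suc j)}" "v \<in> cspan {g j, g (Suc j)}"
      "g j \<in> cspan {u,v}" "g (Suc j) \<in> cspan {u,v}" "cinner u u = 1" "cinner v v = 1" "cinner u v = 0"
      "cinner (E u) u = complex_of_real (dd 0)"
      "cinner (E v) v = complex_of_real (lam j + lam (Suc j) - dd 0)"
      using rotate[OF gjD, of "lam j" "lam (Suc j)" "dd 0"] gon'[of j j] gon'[of "Suc j" "Suc j"]
        gon'[of j "Suc j"] gdiag jn j1 j2 by auto
    define w where "w = lam j + lam (Suc j) - dd 0"
    define \<sigma> where "\<sigma> i = (if i < j then i else Suc i)" for i
    define g' where "g' i = (if i = j then v else g (\<sigma> i))" for i
    define lam' where "lam' i = (if i = j then w else lam (\<sigma> i))" for i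
    define dd' where "dd' i = dd (Suc i)" for i
    have span2D: "cspan {g j, g (Suc j)} \<subseteq> D" using gjD by (intro cspan_D) auto
    have span2sub: "cspan {g j, g (Suc j)} \<subseteq> cspan (g ` {..<Suc n})"
      using jn by (intro cspan_mono) auto
    have \<sigma>n: "\<sigma> i < Suc n" if "i < n" for i using that by (simp add: \<sigma>_def)
    have \<sigma>j: "\<sigma> i \<noteq> j" "\<sigma> i \<noteq> Suc j" if "i \<noteq> j" for i using that by (auto simp: \<sigma>_def)
    have \<sigma>inj: "\<sigma> i = \<sigma> k \<longleftrightarrow> i = k" for i k by (auto simp: \<sigma>_def)
    have orth2: "cinner x (g i) = 0" if "x \<in> cspan {g j, g (Suc j)}" "i < Suc n" "i \<noteq> j" "i \<noteq> Suc j" for x i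
      by (rule cspan_orth[OF that(1) cspan_superset[of "g i" "{g i}"]])
        (use gon'[of j i] gon'[of "Suc j" i] that jn in auto)
    have uo: "cinner u (g (\<sigma> i)) = 0" "cinner v (g (\<sigma> i)) = 0" if "i < n" "i \<noteq> j" for i
      using orth2[OF uv(1) \<sigma>n \<sigma>j] orth2[OF uv(2) \<sigma>n \<sigma>j] that by auto
    have g'D: "\<forall>i<n. g' i \<in> D" using gD span2D uv(2) \<sigma>n by (auto simp: g'_def)
    have g'on: "onf n g'"
      unfolding onf_def
    proof (intro allI impI)
      fix i k assume i: "i < n" and k: "k < n"
      show "cinner (g' i) (g' k) = (if i = k then 1 else 0)"
      proof (cases "i = j"; cases "k = j")
        assume "i = j" "k \<noteq> j" thus ?thesis using uo(2)[OF k] by (simp add: g'_def)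
      next
        assume "i \<noteq> j" "k = j" thus ?thesis using cinner_sym0[OF uo(2)[OF i]] by (simp add: g'_def)
      next
        assume "i = j" "k = j" thus ?thesis using uv(6) by (simp add: g'_def)
      next
        assume "i \<noteq> j" "k \<noteq> j" thus ?thesis using gon'[OF \<sigma>n[OF i] \<sigma>n[OF k]] \<sigma>inj by (simp add: g'_def)
      qed
    qed
    have g'diag: "\<forall>i<n. cinner (E (g' i)) (g' i) = complex_of_real (lam' i)"
      using uv(9) gdiag \<sigma>n by (auto simp: g'_def lam'_def w_def)
    have wb: "lam j \<le> w" "w \<le> lam (Suc j)" using j1 j2 by (auto simp: w_def)
    have lb: "lam i \<le> lam' i" "lam' i \<le> lam (Suc i)" if "i < n" for i
      using lsort that wb by (auto simp: lam'_def \<sigma>_def)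
    have l'sort: "\<forall>i k. i \<le> k \<longrightarrow> k < n \<longrightarrow> lam' i \<le> lam' k"
    proof (intro allI impI)
      fix i k assume ik: "i \<le> k" and k: "k < n"
      show "lam' i \<le> lam' k"
      proof (cases "i = k")
        case False
        hence "lam' i \<le> lam (Suc i)" using lb ik k by simp
        also have "\<dots> \<le> lam k" using lsort ik k False by simp
        also have "\<dots> \<le> lam' k" using lb k by simp
        finally show ?thesis .
      qed simp
    qed
    have d'sort: "\<forall>i k. i \<le> k \<longrightarrow> k < n \<longrightarrow> dd' i \<le> dd' k"
      using dsort by (simp add: dd'_def)
    have lowsum: "(\<Sum>i<k. lam' i) = (\<Sum>i<k. lam i)" if "k \<le> j" for k
      using that by (intro sum.cong) (auto simp: lam'_def \<sigma>_def)
    have highsum: "j < k \<longrightarrow> (\<Sum>i<k. lam' i) = (\<Sum>i<Suc k. lam i) - dd 0" for k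
    proof (induction k)
      case (Suc k)
      show ?case
      proof (cases "k = j")
        case True
        thus ?thesis using lowsum[of j] by (simp add: lam'_def w_def)
      next
        case False
        thus ?thesis using Suc by (auto simp: lam'_def \<sigma>_def)
      qed
    qed simp
    have dsum: "(\<Sum>i<k. dd' i) = (\<Sum>i<Suc k. dd i) - dd 0" for k
      unfolding dd'_def sum.lessThan_Suc_shift by simp
    have maj': "\<forall>k\<le>n. (\<Sum>i<k. lam' i) \<le> (\<Sum>i<k. dd' i)"
    proof (intro allI impI)
      fix k assume k: "k \<le> n"
      show "(\<Sum>i<k. lam' i) \<le> (\<Sum>i<k. dd' i)"
      proof (cases "k \<le> j")
        case True
        have "(\<Sum>i<k. lam' i) = (\<Sum>i<k. lam i)" using lowsum[OF True] .
        also have "\<dots> \<le> (\<Sum>i<k. dd' i)"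
        proof (rule sum_mono)
          fix i assume "i \<in> {..<k}"
          hence i: "i < k" by simp
          have "lam i \<le> lam j" using lsort i True jn by simp
          also have "\<dots> \<le> dd 0" by (rule j1)
          also have "\<dots> \<le> dd' i" using dsort i True jn by (simp add: dd'_def)
          finally show "lam i \<le> dd' i" .
        qed
        finally show ?thesis .
      next
        case False
        thus ?thesis using highsum[of k] dsum[of k] maj[rule_format, of "Suc k"] k by simp
      qed
    qed
    have tot': "(\<Sum>i<n. lam' i) = (\<Sum>i<n. dd' i)"
      using highsum[of n] dsum[of n] tot jn by simp
    obtain e' where e': "onf n e'" "\<forall>i<n. e' i \<in> cspan (g' ` {..<n})"
      "\<forall>i<n. g' i \<in> cspan (e' ` {..<n})" "\<forall>i<n. cinner (E (e' i)) (e' i) = complex_of_real (dd' i)"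
      using Suc.IH[OF g'D g'on g'diag l'sort d'sort maj' tot'] by blast
    define e where "e i = (case i of 0 \<Rightarrow> u | Suc k \<Rightarrow> e' k)" for i
    have ug': "cinner u (g' k) = 0" if "k < n" for k
      using uo[OF that] uv(7) by (auto simp: g'_def)
    have ue': "cinner u (e' i) = 0" if "i < n" for i
      using cspan_orth[OF cspan_superset[of u "{u}"] e'(2)[rule_format, OF that]] ug' by auto
    have eon: "onf (Suc n) e"
      unfolding onf_def
    proof (intro allI impI)
      fix i k assume i: "i < Suc n" and k: "k < Suc n"
      show "cinner (e i) (e k) = (if i = k then 1 else 0)"
        using e'(1) i k uv(5) ue' cinner_sym0[OF ue'] unfolding onf_def
        by (cases i; cases k) (auto simp: e_def)
    qed
    have g'sub: "g' ` {..<n} \<subseteq> cspan (g ` {..<Suc n})"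
    proof
      fix x assume "x \<in> g' ` {..<n}"
      then obtain k where k: "k < n" "x = g' k" by auto
      show "x \<in> cspan (g ` {..<Suc n})"
      proof (cases "k = j")
        case True thus ?thesis using k uv(2) span2sub by (auto simp: g'_def)
      next
        case False thus ?thesis using k \<sigma>n[OF k(1)] by (auto simp: g'_def intro!: cspan_superset)
      qed
    qed
    have e1: "\<forall>i<Suc n. e i \<in> cspan (g ` {..<Suc n})"
    proof (intro allI impI)
      fix i assume i: "i < Suc n"
      show "e i \<in> cspan (g ` {..<Suc n})"
      proof (cases i)
        case 0 thus ?thesis using uv(1) span2sub by (auto simp: e_def)
      next
        case (Suc k)
        thus ?thesis using e'(2) i cspan_subset[OF g'sub] by (auto simp: e_def)
      qed
    qed
    have esub: "cspan (e' ` {..<n}) \<subseteq> cspan (e ` {..<Suc n})"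
      by (intro cspan_mono) (auto simp: e_def image_iff intro!: bexI[of _ "Suc _"])
    have g'e: "g' k \<in> cspan (e ` {..<Suc n})" if "k < n" for k
      using e'(3) that esub by auto
    have uve: "{u, v} \<subseteq> cspan (e ` {..<Suc n})"
      using g'e[OF jn] by (auto simp: g'_def e_def intro!: cspan_superset image_eqI[of u _ 0])
    have e2: "\<forall>i<Suc n. g i \<in> cspan (e ` {..<Suc n})"
    proof (intro allI impI)
      fix i assume i: "i < Suc n"
      consider "i < j" | "i = j" | "i = Suc j" | "Suc j < i" by linarith
      thus "g i \<in> cspan (e ` {..<Suc n})"
      proof cases
        case 1 thus ?thesis using g'e[of i] jn by (simp add: g'_def \<sigma>_def)
      next
        case 2 thus ?thesis using uv(3) cspan_subset[OF uve] by auto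
      next
        case 3 thus ?thesis using uv(4) cspan_subset[OF uve] by auto
      next
        case 4
        hence "\<sigma> (i - 1) = i" "i - 1 \<noteq> j" "i - 1 < n" using i by (auto simp: \<sigma>_def)
        thus ?thesis using g'e[of "i - 1"] by (simp add: g'_def)
      qed
    qed
    have e3: "\<forall>i<Suc n. cinner (E (e i)) (e i) = complex_of_real (dd i)"
    proof (intro allI impI)
      fix i assume i: "i < Suc n"
      show "cinner (E (e i)) (e i) = complex_of_real (dd i)"
        using uv(8) e'(4) i by (cases i) (auto simp: e_def dd'_def)
    qed
    show ?thesis using eon e1 e2 e3 by blast
  qed
qed

end


lemma sum_split_shift: "(\<Sum>i<m + k. h i) = (\<Sum>i<m. h i) + (\<Sum>i<k. h (m + i))"
  for h :: "nat \<Rightarrow> real"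
  by (induction k) auto

theorem lemma2p5:
  fixes E :: "'a::complex_hilbert \<Rightarrow> 'a" and D :: "'a set"
    and d lam :: "nat \<Rightarrow> real" and f :: "nat \<Rightarrow> 'a"
  assumes op: "operator_on D E"
    and dense: "closure D = UNIV"
    and sym: "symmetric_on D E"
    and mono_d: "mono d" and mono_lam: "mono lam"
    and delta_nonneg: "\<And>k. (\<Sum>i<k. d i - lam i) \<ge> 0"
    and delta_zero: "infinite {k. (\<Sum>i<k. d i - lam i) = 0}"
    and fD: "\<And>i. f i \<in> D"
    and f_on: "orthonormal_seq f"
    and f_diag: "\<And>i. cinner (E (f i)) (f i) = complex_of_real (lam i)"
  shows "\<exists>e::nat \<Rightarrow> 'a. orthonormal_seq e \<and> (\<forall>i. e i \<in> cspan (range f))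
           \<and> closure (cspan (range e)) = closure (cspan (range f))
           \<and> (\<forall>i. cinner (E (e i)) (e i) = complex_of_real (d i))"
proof -
  interpret ops D E using op sym by unfold_locales
  define S where "S = {k. (\<Sum>i<k. d i - lam i) = 0}"
  have infS: "infinite S" using delta_zero by (simp add: S_def)
  define z where "z = enumerate S"
  have z0: "z 0 = 0" unfolding z_def enumerate_0 S_def by (rule Least_equality) auto
  have zS: "z b \<in> S" for b unfolding z_def using infS by (rule enumerate_in_set)
  have zle: "z b \<le> z c \<longleftrightarrow> b \<le> c" for b c unfolding z_def using infS by simp
  have zlt: "z b < z c \<longleftrightarrow> b < c" for b c unfolding z_def using infS by simp
  have zge: "n \<le> z n" for n unfolding z_def using infS by (rule le_enumerate)
  define N where "N b = z (Suc b) - z b" for b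
  define G where "G b i = f (z b + i)" for b i
  have fon: "cinner (f i) (f k) = (if i = k then 1 else 0)" for i k
    using f_on unfolding orthonormal_seq_def by blast
  have block: "\<exists>e. onf (N b) e \<and> (\<forall>i<N b. e i \<in> cspan (G b ` {..<N b}))
      \<and> (\<forall>i<N b. G b i \<in> cspan (e ` {..<N b}))
      \<and> (\<forall>i<N b. cinner (E (e i)) (e i) = complex_of_real (d (z b + i)))" for b
  proof (rule fin)
    show "\<forall>i<N b. G b i \<in> D" using fD by (simp add: G_def)
    show "onf (N b) (G b)" using fon by (simp add: onf_def G_def)
    show "\<forall>i<N b. cinner (E (G b i)) (G b i) = complex_of_real (lam (z b + i))"
      using f_diag by (simp add: G_def)
    show "\<forall>i k. i \<le> k \<longrightarrow> k < N b \<longrightarrow> lam (z b + i) \<le> lam (z b + k)"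
      using mono_lam by (auto intro: monoD)
    show "\<forall>i k. i \<le> k \<longrightarrow> k < N b \<longrightarrow> d (z b + i) \<le> d (z b + k)"
      using mono_d by (auto intro: monoD)
    have zb0: "(\<Sum>i<z b. d i - lam i) = 0" using zS[of b] by (simp add: S_def)
    have part: "(\<Sum>i<k. d (z b + i) - lam (z b + i)) = (\<Sum>i<z b + k. d i - lam i)" for k
      using sum_split_shift[of "\<lambda>i. d i - lam i" "z b" k] zb0 by simp
    show "\<forall>k\<le>N b. (\<Sum>i<k. lam (z b + i)) \<le> (\<Sum>i<k. d (z b + i))"
    proof (intro allI impI)
      fix k
      have "0 \<le> (\<Sum>i<k. d (z b + i) - lam (z b + i))" using part delta_nonneg by simp
      thus "(\<Sum>i<k. lam (z b + i)) \<le> (\<Sum>i<k. d (z b + i))" by (simp add: sum_subtractf)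
    qed
    have "z b \<le> z (Suc b)" using zle by simp
    hence "z b + N b = z (Suc b)" by (simp add: N_def)
    hence "(\<Sum>i<N b. d (z b + i) - lam (z b + i)) = 0" using part[of "N b"] zS[of "Suc b"]
      by (simp add: S_def)
    thus "(\<Sum>i<N b. lam (z b + i)) = (\<Sum>i<N b. d (z b + i))" by (simp add: sum_subtractf)
  qed
  then obtain EB where EB: "\<And>b. onf (N b) (EB b)" "\<And>b i. i < N b \<Longrightarrow> EB b i \<in> cspan (G b ` {..<N b})"
      "\<And>b i. i < N b \<Longrightarrow> G b i \<in> cspan (EB b ` {..<N b})"
      "\<And>b i. i < N b \<Longrightarrow> cinner (E (EB b i)) (EB b i) = complex_of_real (d (z b + i))"
    by metis
  define blk where "blk i = (LEAST b. i < z (Suc b))" for i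
  have blk1: "z (blk i) \<le> i \<and> i < z (Suc (blk i))" for i
  proof
    have ex: "\<exists>b. i < z (Suc b)" using zge[of "Suc i"] Suc_le_lessD by blast
    show "i < z (Suc (blk i))" unfolding blk_def using ex by (rule LeastI_ex)
    show "z (blk i) \<le> i"
    proof (cases "blk i")
      case 0 thus ?thesis using z0 by simp
    next
      case (Suc b)
      hence "\<not> i < z (Suc b)" unfolding blk_def
        using not_less_Least[of b "\<lambda>b. i < z (Suc b)"] by (simp add: blk_def)
      thus ?thesis using Suc by simp
    qed
  qed
  have blk_uniq: "blk i = b" if "z b \<le> i" "i < z (Suc b)" for i b
  proof (rule ccontr)
    assume ne: "blk i \<noteq> b"
    show False
    proof (cases "blk i < b")
      case True
      hence "z (Suc (blk i)) \<le> z b" using zle by simp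
      thus False using blk1[of i] that by simp
    next
      case False
      hence "Suc b \<le> blk i" using ne by simp
      hence "z (Suc b) \<le> z (blk i)" using zle by simp
      thus False using blk1[of i] that by simp
    qed
  qed
  have Nb: "z b + N b = z (Suc b)" for b using zle[of b "Suc b"] by (simp add: N_def)
  have blk_shift: "blk (z b + r) = b" if "r < N b" for b r
    using blk_uniq[of b "z b + r"] that Nb[of b] by simp
  define e where "e i = EB (blk i) (i - z (blk i))" for i
  have ridx: "i - z (blk i) < N (blk i)" "z (blk i) + (i - z (blk i)) = i" for i
    using blk1[of i] Nb[of "blk i"] by auto
  have e_shift: "e (z b + r) = EB b r" if "r < N b" for b r
    using blk_shift[OF that] by (simp add: e_def)
  have e_span: "e i \<in> cspan (G (blk i) ` {..<N (blk i)})" for i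
    unfolding e_def using EB(2) ridx by blast
  have e_on: "orthonormal_seq e"
    unfolding orthonormal_seq_def
  proof (intro allI)
    fix i k
    show "cinner (e i) (e k) = (if i = k then 1 else 0)"
    proof (cases "blk i = blk k")
      case True
      have "cinner (e i) (e k) = (if i - z (blk i) = k - z (blk k) then 1 else 0)"
        using EB(1)[of "blk i"] ridx[of i] ridx[of k] True unfolding onf_def e_def by auto
      also have "(i - z (blk i) = k - z (blk k)) \<longleftrightarrow> i = k" using ridx[of i] ridx[of k] True by metis
      finally show ?thesis .
    next
      case False
      have "cinner (e i) (e k) = 0"
      proof (rule cspan_orth[OF e_span e_span])
        fix a c assume a: "a \<in> G (blk i) ` {..<N (blk i)}" and c: "c \<in> G (blk k) ` {..<N (blk k)}"
        then obtain r s where rs: "r < N (blk i)" "a = f (z (blk i) + r)" "s < N (blk k)" "c = f (z (blk k) + s)"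
          by (auto simp: G_def)
        have "z (blk i) + r \<noteq> z (blk k) + s"
          using blk_shift[OF rs(1)] blk_shift[OF rs(3)] False by metis
        thus "cinner a c = 0" using fon rs by simp
      qed
      thus ?thesis using False by auto
    qed
  qed
  have Gsub: "G b ` {..<N b} \<subseteq> range f" for b by (auto simp: G_def)
  have e_in: "\<forall>i. e i \<in> cspan (range f)"
    using e_span cspan_mono[OF Gsub] by blast
  have EBsub: "EB b ` {..<N b} \<subseteq> range e" for b
    using e_shift by (auto simp: image_iff) (metis rangeI)
  have f_in: "range f \<subseteq> cspan (range e)"
  proof
    fix x assume "x \<in> range f"
    then obtain i where x: "x = f i" by auto
    have "f i = G (blk i) (i - z (blk i))" using ridx[of i] by (simp add: G_def)
    also have "\<dots> \<in> cspan (EB (blk i) ` {..<N (blk i)})" using EB(3) ridx by blast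
    also have "\<dots> \<subseteq> cspan (range e)" by (rule cspan_mono[OF EBsub])
    finally show "x \<in> cspan (range e)" using x by simp
  qed
  have span_eq: "cspan (range e) = cspan (range f)"
  proof
    show "cspan (range e) \<subseteq> cspan (range f)" using e_in by (intro cspan_subset) auto
    show "cspan (range f) \<subseteq> cspan (range e)" using f_in by (rule cspan_subset)
  qed
  have e_diag: "\<forall>i. cinner (E (e i)) (e i) = complex_of_real (d i)"
    using EB(4) ridx unfolding e_def by metis
  show ?thesis using e_on e_in span_eq e_diag by (intro exI[of _ e]) simp
qed

end
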